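(* Assume $CA_2$. Then there is a coloring $o:[\omega_1]^2\to\omega$ such that for every uncountable family $\mathcal A\subseteq[\omega_1]^{<\omega}$ of pairwise disjoint sets and every $n\in\omega$ there are $a,b\in\mathcal A$ with $a<b$ such that $o(\alpha,\beta)=n$ for all $\alpha\in a$ and $\beta\in b$.
   Context: For finite sets of ordinals, $a<b$ means every element of $a$ is below every element of $b$. A type is a sequence $\tau=\{(m_k,n_{k+1},r_{k+1})\}_{k\in\omega}$ of natural numbers with $m_0=1$; $n_k\ge2$ for $k\ge1$; every $r\in\omega$ equals $r_k$ for infinitely many $k$; $m_k>r_{k+1}$; and $m_{k+1}=r_{k+1}+(m_k-r_{k+1})n_{k+1}$ for all $k$. For a set of ordinals $X$ and $\mathcal F\subseteq[X]^{<\omega}$, $\mathcal F_k$ is the set of elements of rank $k$ in $(\mathcal F,\subsetneq)$; $A\sqsubseteq B$ means $A\subseteq B$ and every element of $B$ below an element of $A$ is in $A$. $\mathcal F$ is a construction scheme over $X$ of type $\tau$ if (1) every finite subset of $X$ lies in a member of $\mathcal F$; (2) $|F|=m_k$ for $F\in\mathcal F_k$; (3) $E\cap F\sqsubseteq E,F$ for $E,F\in\mathcal F_k$; (4) each $F\in\mathcal F_{k+1}$ is the union of uniquely determined $F_0,\dots,F_{n_{k+1}-1}\in\mathcal F_k$ forming a $\Delta$-system with root $R(F)$, $|R(F)|=r_{k+1}$, $R(F)<F_0\setminus R(F)<\dots<F_{n_{k+1}-1}\setminus R(F)$. For a construction scheme $\mathcal F$ over $\omega_1$, $l\ge1$, $F\in\mathcal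 F_l$ and finite $\mathcal C\subseteq[\omega_1]^{<\omega}$: $F$ captures $\mathcal C$ if $|\mathcal C|\le n_l$ and $\mathcal C$ can be enumerated as $\{c_i\}_{i<|\mathcal C|}$ with $c_i\subseteq F_i$, $c_i\setminus R(F)\neq\emptyset$ and $\phi_i[c_0]=c_i$ where $\phi_i:F_0\to F_i$ is the increasing bijection. $\mathcal F$ is $n$-capturing if for every uncountable $S\subseteq[\omega_1]^{<\omega}$ and every $k\in\omega$ there are $\mathcal C\in[S]^n$, $l>k$ and $F\in\mathcal F_l$ capturing $\mathcal C$. $CA_n$ is the statement: for every type $\tau$ with $n\le n_k$ for all $k\ge1$ there is an $n$-capturing construction scheme over $\omega_1$ of type $\tau$. *)

theory Defs
  imports Main "HOL-Library.Countable_Set"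
begin

section \<open>omega_1, represented by an abstract well-order of order type omega_1\<close>

text \<open>A well-order w is of order type omega_1 iff its field is uncountable and every
  proper initial segment is countable. All such well-orders are isomorphic to omega_1.\<close>
definition omega1_order :: "'a rel \<Rightarrow> bool" where
  "omega1_order w \<longleftrightarrow> Well_order w \<and> \<not> countable (Field w)
     \<and> (\<forall>\<alpha>\<in>Field w. countable (underS w \<alpha>))"

definition olt :: "'a rel \<Rightarrow> 'a \<Rightarrow> 'a \<Rightarrow> bool" where
  "olt w a b \<longleftrightarrow> (a, b) \<in> w \<and> a \<noteq> b"

definition set_lt :: "'a rel \<Rightarrow> 'a set \<Rightarrow> 'a set \<Rightarrow> bool" where
  "set_lt w A B \<longleftrightarrow> (\<forall>x\<in>A. \<forall>y\<in>B. olt w x y)"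

definition init_seg :: "'a rel \<Rightarrow> 'a set \<Rightarrow> 'a set \<Rightarrow> bool" where
  "init_seg w A B \<longleftrightarrow> A \<subseteq> B \<and> (\<forall>x\<in>B. \<forall>y\<in>A. olt w x y \<longrightarrow> x \<in> A)"

text \<open>A type is the sequence (m k, n (k+1), r (k+1)) for k in omega; the values n 0 and
  r 0 are not part of the type and are ignored.\<close>
definition is_type :: "(nat \<Rightarrow> nat) \<Rightarrow> (nat \<Rightarrow> nat) \<Rightarrow> (nat \<Rightarrow> nat) \<Rightarrow> bool" where
  "is_type m n r \<longleftrightarrow> m 0 = 1
     \<and> (\<forall>k\<ge>1. n k \<ge> 2)
     \<and> (\<forall>j::nat. infinite {k. k \<ge> 1 \<and> r k = j})
     \<and> (\<forall>k. m k > r (k + 1))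
     \<and> (\<forall>k. m (k + 1) = r (k + 1) + (m k - r (k + 1)) * n (k + 1))"

definition rank_in :: "'a set set \<Rightarrow> 'a set \<Rightarrow> nat" where
  "rank_in F = wfrec finite_psubset
     (\<lambda>rec E. Max (insert 0 {rec D + 1 | D. D \<in> F \<and> D \<subset> E}))"

definition level :: "'a set set \<Rightarrow> nat \<Rightarrow> 'a set set" where
  "level F k = {E \<in> F. rank_in F E = k}"

definition decomp :: "'a rel \<Rightarrow> 'a set set \<Rightarrow> (nat \<Rightarrow> nat) \<Rightarrow> (nat \<Rightarrow> nat) \<Rightarrow> nat
    \<Rightarrow> 'a set \<Rightarrow> 'a set list \<Rightarrow> 'a set \<Rightarrow> bool" where
  "decomp w F n r k E Fs R \<longleftrightarrow>
     length Fs = n (k + 1)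
     \<and> (\<forall>i < length Fs. Fs ! i \<in> level F k)
     \<and> E = \<Union> (set Fs)
     \<and> (\<forall>i j. i < length Fs \<and> j < length Fs \<and> i \<noteq> j \<longrightarrow> Fs ! i \<inter> Fs ! j = R)
     \<and> card R = r (k + 1)
     \<and> set_lt w R (Fs ! 0 - R)
     \<and> (\<forall>i. i + 1 < length Fs \<longrightarrow> set_lt w (Fs ! i - R) (Fs ! (i + 1) - R))"

definition construction_scheme :: "'a rel \<Rightarrow> 'a set set \<Rightarrow>
    (nat \<Rightarrow> nat) \<Rightarrow> (nat \<Rightarrow> nat) \<Rightarrow> (nat \<Rightarrow> nat) \<Rightarrow> bool" where
  "construction_scheme w F m n r \<longleftrightarrow>
     (\<forall>E\<in>F. finite E \<and> E \<subseteq> Field w)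
     \<and> (\<forall>A. finite A \<and> A \<subseteq> Field w \<longrightarrow> (\<exists>E\<in>F. A \<subseteq> E))
     \<and> (\<forall>k. \<forall>E\<in>level F k. card E = m k)
     \<and> (\<forall>k. \<forall>E\<in>level F k. \<forall>E'\<in>level F k.
           init_seg w (E \<inter> E') E \<and> init_seg w (E \<inter> E') E')
     \<and> (\<forall>k. \<forall>E\<in>level F (k + 1). \<exists>!Fs. \<exists>R. decomp w F n r k E Fs R)"

definition incr_bij :: "'a rel \<Rightarrow> ('a \<Rightarrow> 'a) \<Rightarrow> 'a set \<Rightarrow> 'a set \<Rightarrow> bool" where
  "incr_bij w \<phi> A B \<longleftrightarrow> bij_betw \<phi> A B \<and> (\<forall>x\<in>A. \<forall>y\<in>A. olt w x y \<longrightarrow> olt w (\<phi> x) (\<phi> y))"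

definition captures :: "'a rel \<Rightarrow> 'a set set \<Rightarrow> (nat \<Rightarrow> nat) \<Rightarrow> (nat \<Rightarrow> nat)
    \<Rightarrow> nat \<Rightarrow> 'a set \<Rightarrow> 'a set set \<Rightarrow> bool" where
  "captures w F n r l E C \<longleftrightarrow> l \<ge> 1 \<and> E \<in> level F l \<and> finite C \<and> card C \<le> n l
     \<and> (\<exists>Fs R. decomp w F n r (l - 1) E Fs R
        \<and> (\<exists>cs. distinct cs \<and> set cs = C
              \<and> (\<forall>i < length cs. cs ! i \<subseteq> Fs ! i \<and> cs ! i - R \<noteq> {}
                   \<and> (\<exists>\<phi>. incr_bij w \<phi> (Fs ! 0) (Fs ! i) \<and> \<phi> ` (cs ! 0) = cs ! i))))"

definition n_capturing :: "nat \<Rightarrow> 'a rel \<Rightarrow> 'a set set \<Rightarrow> (nat \<Rightarrow> nat) \<Rightarrow> (nat \<Rightarrow> nat) \<Rightarrow> bool" where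
  "n_capturing q w F n r \<longleftrightarrow>
     (\<forall>S. (\<forall>s\<in>S. finite s \<and> s \<subseteq> Field w) \<and> \<not> countable S \<longrightarrow>
        (\<forall>k. \<exists>C l E. C \<subseteq> S \<and> finite C \<and> card C = q \<and> l > k \<and> E \<in> level F l
                   \<and> captures w F n r l E C))"

definition CA :: "nat \<Rightarrow> 'a rel \<Rightarrow> bool" where
  "CA q w \<longleftrightarrow> (\<forall>m n r. is_type m n r \<and> (\<forall>k\<ge>1. q \<le> n k) \<longrightarrow>
      (\<exists>F. construction_scheme w F m n r \<and> n_capturing q w F n r))"

end

theory Submission
  imports Defs
begin


lemma wo_facts:
  assumes "Well_order w"
  shows "trans w" "antisym w" "total_on (Field w) w"
  using assms by (auto simp: order_on_defs)

lemma olt_trans: "Well_order w \<Longrightarrow> olt w a b \<Longrightarrow> olt w b c \<Longrightarrow> olt w a c"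
  unfolding olt_def using wo_facts[of w]
  by (metis antisymD transD)

lemma olt_asym: "Well_order w \<Longrightarrow> olt w a b \<Longrightarrow> \<not> olt w b a"
  unfolding olt_def using wo_facts[of w] by (metis antisymD)

lemma olt_irrefl: "\<not> olt w a a"
  unfolding olt_def by simp

lemma olt_total: "Well_order w \<Longrightarrow> a \<in> Field w \<Longrightarrow> b \<in> Field w \<Longrightarrow> a \<noteq> b \<Longrightarrow> olt w a b \<or> olt w b a"
  unfolding olt_def using wo_facts[of w] by (metis total_on_def)

lemma olt_field: "olt w a b \<Longrightarrow> a \<in> Field w \<and> b \<in> Field w"
  unfolding olt_def by (auto intro: FieldI1 FieldI2)

lemma pos_inj:
  assumes wo: "Well_order w" and P: "finite P" "P \<subseteq> Field w" and pq: "p \<in> P" "q \<in> P"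
    and c: "card {z\<in>P. olt w z p} = card {z\<in>P. olt w z q}"
  shows "p = q"
proof (rule ccontr)
  assume "p \<noteq> q"
  then have "olt w p q \<or> olt w q p" using olt_total[OF wo] P pq by blast
  then show False
  proof
    assume o: "olt w p q"
    have "{z\<in>P. olt w z p} \<subset> {z\<in>P. olt w z q}"
      using o pq olt_trans[OF wo] olt_irrefl[of w p] by blast
    then have "card {z\<in>P. olt w z p} < card {z\<in>P. olt w z q}"
      using P by (intro psubset_card_mono) auto
    then show False using c by simp
  next
    assume o: "olt w q p"
    have "{z\<in>P. olt w z q} \<subset> {z\<in>P. olt w z p}"
      using o pq olt_trans[OF wo] olt_irrefl[of w q] by blast
    then have "card {z\<in>P. olt w z q} < card {z\<in>P. olt w z p}"
      using P by (intro psubset_card_mono) auto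
    then show False using c by simp
  qed
qed

lemma incr_image_below:
  assumes wo: "Well_order w" and inj: "inj_on \<phi> A" and A: "A \<subseteq> Field w"
    and inc: "\<forall>x\<in>A. \<forall>y\<in>A. olt w x y \<longrightarrow> olt w (\<phi> x) (\<phi> y)" and u: "u \<in> A"
  shows "\<phi> ` {z\<in>A. olt w z u} = {z\<in>\<phi> ` A. olt w z (\<phi> u)}"
proof
  show "\<phi> ` {z\<in>A. olt w z u} \<subseteq> {z\<in>\<phi> ` A. olt w z (\<phi> u)}" using inc u by auto
next
  show "{z\<in>\<phi> ` A. olt w z (\<phi> u)} \<subseteq> \<phi> ` {z\<in>A. olt w z u}"
  proof
    fix z assume "z \<in> {z\<in>\<phi> ` A. olt w z (\<phi> u)}"
    then obtain v where v: "v \<in> A" "z = \<phi> v" "olt w (\<phi> v) (\<phi> u)" by auto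
    have "v \<noteq> u" using v olt_irrefl by metis
    then have "olt w v u \<or> olt w u v" using olt_total[OF wo] A u v by blast
    moreover have "\<not> olt w u v" using inc u v olt_asym[OF wo] by blast
    ultimately show "z \<in> \<phi> ` {z\<in>A. olt w z u}" using v by auto
  qed
qed

lemma incr_card_below:
  assumes wo: "Well_order w" and inj: "inj_on \<phi> A" and A: "A \<subseteq> Field w"
    and inc: "\<forall>x\<in>A. \<forall>y\<in>A. olt w x y \<longrightarrow> olt w (\<phi> x) (\<phi> y)" and u: "u \<in> A"
  shows "card {z\<in>\<phi> ` A. olt w z (\<phi> u)} = card {z\<in>A. olt w z u}"
proof -
  have "card (\<phi> ` {z\<in>A. olt w z u}) = card {z\<in>A. olt w z u}"
    by (rule card_image) (rule inj_on_subset[OF inj], auto)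
  then show ?thesis using incr_image_below[OF assms] by simp
qed

definition tr :: "nat \<Rightarrow> nat" where "tr k = (if k = 0 then 0 else fst (prod_decode (k - 1)))"

fun mm :: "nat \<Rightarrow> nat" where
  "mm 0 = 1"
| "mm (Suc k) = 2 * mm k - tr (Suc k)"

lemma tr_le: "tr (Suc k) \<le> k"
proof -
  obtain a b where "prod_decode k = (a, b)" by (cases "prod_decode k")
  then have "k = prod_encode (a,b)" by (metis prod_decode_inverse)
  then have "a \<le> k" using le_prod_encode_1 by metis
  then show ?thesis using \<open>prod_decode k = (a, b)\<close> by (simp add: tr_def)
qed

lemma mm_ge: "mm k \<ge> k + 1"
proof (induction k)
  case 0 then show ?case by simp
next
  case (Suc k) then show ?case using tr_le[of k] by simp
qed

lemma type_exists: "is_type mm (\<lambda>_. 2) tr"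
  unfolding is_type_def
proof (intro conjI allI impI)
  show "mm 0 = 1" by simp
  show "\<And>k. 1 \<le> k \<Longrightarrow> 2 \<le> (2::nat)" by simp
  fix j :: nat
  have "Suc ` (\<lambda>b. prod_encode (j, b)) ` UNIV \<subseteq> {k. k \<ge> 1 \<and> tr k = j}"
    by (auto simp: tr_def)
  moreover have "infinite (Suc ` (\<lambda>b. prod_encode (j, b)) ` (UNIV::nat set))"
  proof -
    have "inj (\<lambda>b. prod_encode (j, b))" by (auto simp: inj_on_def)
    then have "infinite (range (\<lambda>b. prod_encode (j, b)))" by (rule range_inj_infinite)
    then show ?thesis by (simp add: finite_image_iff)
  qed
  ultimately show "infinite {k. k \<ge> 1 \<and> tr k = j}" using finite_subset by blast
next
  fix k
  show "tr (k + 1) < mm k" using tr_le[of k] mm_ge[of k] by simp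
  show "mm (k + 1) = tr (k + 1) + (mm k - tr (k + 1)) * 2"
    using tr_le[of k] mm_ge[of k] by simp
qed




locale cs_ctx =
  fixes w :: "'a rel" and F :: "'a set set" and m n r :: "nat \<Rightarrow> nat"
  assumes wo: "Well_order w" and csch: "construction_scheme w F m n r"
    and tyax: "is_type m n r" and n2: "\<And>k. n k = 2"
begin

lemma F_sub: "E \<in> F \<Longrightarrow> finite E \<and> E \<subseteq> Field w"
  using csch unfolding construction_scheme_def by blast

lemma level_sub: "E \<in> level F k \<Longrightarrow> E \<in> F"
  unfolding level_def by blast

lemma lev_fin: "E \<in> level F k \<Longrightarrow> finite E \<and> E \<subseteq> Field w"
  using F_sub level_sub by blast

lemma lev_card: "E \<in> level F k \<Longrightarrow> card E = m k"
  using csch unfolding construction_scheme_def by blast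

lemma cover: assumes "x \<in> Field w" "y \<in> Field w" shows "\<exists>l. \<exists>G\<in>level F l. x \<in> G \<and> y \<in> G"
proof -
  have cv: "\<forall>A. finite A \<and> A \<subseteq> Field w \<longrightarrow> (\<exists>E\<in>F. A \<subseteq> E)"
    using csch unfolding construction_scheme_def by blast
  have "\<exists>E\<in>F. {x, y} \<subseteq> E" using cv[rule_format, of "{x,y}"] assms by simp
  then obtain E where "E \<in> F" "{x,y} \<subseteq> E" by blast
  then have "E \<in> level F (rank_in F E)" unfolding level_def by simp
  then show ?thesis using \<open>{x,y} \<subseteq> E\<close> by blast
qed

lemma decomp_ex: "E \<in> level F (k + 1) \<Longrightarrow> \<exists>Fs R. decomp w F n r k E Fs R"
  using csch unfolding construction_scheme_def by (metis (no_types, lifting) ex1E)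

lemma coh: "E \<in> level F k \<Longrightarrow> E' \<in> level F k \<Longrightarrow> init_seg w (E \<inter> E') E"
  using csch unfolding construction_scheme_def by blast

lemma lemA_aux:
  "G \<in> level F j \<Longrightarrow> E \<in> level F (j + d) \<Longrightarrow> x \<in> G \<Longrightarrow> x \<in> E \<Longrightarrow> \<gamma> \<in> G \<Longrightarrow> olt w \<gamma> x \<Longrightarrow> \<gamma> \<in> E"
proof (induction d arbitrary: E x)
  case 0
  then have "init_seg w (G \<inter> E) G" using coh by simp
  then show ?case using 0 unfolding init_seg_def by blast
next
  case (Suc d)
  from Suc.prems(2) have "E \<in> level F ((j + d) + 1)" by simp
  then obtain Fs R where dc: "decomp w F n r (j + d) E Fs R" using decomp_ex by blast
  then have "E = \<Union> (set Fs)" "\<forall>i<length Fs. Fs ! i \<in> level F (j + d)" unfolding decomp_def by auto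
  then obtain P where P: "P \<in> set Fs" "x \<in> P" using Suc.prems by auto
  then have "P \<in> level F (j + d)" using \<open>\<forall>i<length Fs. Fs ! i \<in> level F (j + d)\<close> by (metis in_set_conv_nth)
  then have "\<gamma> \<in> P" using Suc.IH[of P x] Suc.prems P by blast
  then show ?case using P \<open>E = \<Union> (set Fs)\<close> by blast
qed

lemma lemA:
  assumes "j \<le> l" "G \<in> level F j" "E \<in> level F l" "x \<in> G" "x \<in> E" "\<gamma> \<in> G" "olt w \<gamma> x"
  shows "\<gamma> \<in> E"
proof -
  have E': "E \<in> level F (j + (l - j))" using assms by simp
  show ?thesis by (rule lemA_aux[OF assms(2) E' assms(4-7)])
qed

definition rho :: "'a \<Rightarrow> 'a \<Rightarrow> nat" where
  "rho x y = (LEAST l. \<exists>G\<in>level F l. x \<in> G \<and> y \<in> G)"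

lemma rho_le: "G \<in> level F l \<Longrightarrow> x \<in> G \<Longrightarrow> y \<in> G \<Longrightarrow> rho x y \<le> l"
  unfolding rho_def by (rule Least_le) blast

lemma rho_ex: "x \<in> Field w \<Longrightarrow> y \<in> Field w \<Longrightarrow> \<exists>G\<in>level F (rho x y). x \<in> G \<and> y \<in> G"
  unfolding rho_def using cover by (rule LeastI_ex)

definition Bl :: "nat \<Rightarrow> 'a \<Rightarrow> 'a set" where
  "Bl l z = {\<gamma>. olt w \<gamma> z \<and> rho \<gamma> z \<le> l}"

lemma Bl_eq: assumes "z \<in> P" "P \<in> level F l" shows "Bl l z = {\<gamma>\<in>P. olt w \<gamma> z}"
proof
  show "{\<gamma>\<in>P. olt w \<gamma> z} \<subseteq> Bl l z" using rho_le assms unfolding Bl_def by blast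
next
  show "Bl l z \<subseteq> {\<gamma>\<in>P. olt w \<gamma> z}"
  proof
    fix \<gamma> assume "\<gamma> \<in> Bl l z"
    then have g: "olt w \<gamma> z" "rho \<gamma> z \<le> l" unfolding Bl_def by auto
    have "\<gamma> \<in> Field w" "z \<in> Field w" using olt_field[OF g(1)] by auto
    then obtain G where G: "G \<in> level F (rho \<gamma> z)" "\<gamma> \<in> G" "z \<in> G"
      using rho_ex[of \<gamma> z] by blast
    have "\<gamma> \<in> P" by (rule lemA[OF g(2) G(1) assms(2) G(3) assms(1) G(2) g(1)])
    then show "\<gamma> \<in> {\<gamma>\<in>P. olt w \<gamma> z}" using g by simp
  qed
qed

fun wk :: "nat \<Rightarrow> 'a \<Rightarrow> 'a \<Rightarrow> nat" where
  "wk 0 x y = 0"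
| "wk (Suc k) x y = (if card (Bl (rho x y - 1) y) < card (Bl (rho x y - 1) x)
     then Suc (wk k (THE \<gamma>. olt w \<gamma> x \<and> rho \<gamma> x \<le> rho x y - 1
                     \<and> card (Bl (rho x y - 1) \<gamma>) = card (Bl (rho x y - 1) y)) x)
     else 0)"

end



context cs_ctx begin

lemma cap_geo:
  assumes E: "E \<in> level F l" "l \<ge> 1" and dc: "decomp w F n r (l - 1) E Fs R"
  shows "length Fs = 2" "Fs!0 \<in> level F (l-1)" "Fs!1 \<in> level F (l-1)" "Fs!0 \<inter> Fs!1 = R"
    "set_lt w R (Fs!0 - R)" "set_lt w (Fs!0 - R) (Fs!1 - R)" "Fs!0 - R \<noteq> {}"
    "set_lt w R (Fs!1 - R)" "card R = r l"
proof -
  have l: "l - 1 + 1 = l" using E by simp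
  show len: "length Fs = 2" using dc n2 unfolding decomp_def by simp
  show F0: "Fs!0 \<in> level F (l-1)" using dc len unfolding decomp_def by simp
  show F1: "Fs!1 \<in> level F (l-1)" using dc len unfolding decomp_def by simp
  have "\<forall>i j. i < length Fs \<and> j < length Fs \<and> i \<noteq> j \<longrightarrow> Fs!i \<inter> Fs!j = R"
    using dc unfolding decomp_def by blast
  then show I: "Fs!0 \<inter> Fs!1 = R" using len by (metis zero_neq_one zero_less_numeral one_less_numeral_iff semiring_norm(76))
  show A: "set_lt w R (Fs!0 - R)" using dc unfolding decomp_def by simp
  have "\<forall>i. i + 1 < length Fs \<longrightarrow> set_lt w (Fs ! i - R) (Fs ! (i + 1) - R)"
    using dc unfolding decomp_def by blast
  then show B: "set_lt w (Fs!0 - R) (Fs!1 - R)" using len by fastforce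
  show cR: "card R = r l" using dc l unfolding decomp_def by simp
  show ne: "Fs!0 - R \<noteq> {}"
  proof
    assume "Fs!0 - R = {}"
    then have "Fs!0 \<subseteq> R" by blast
    moreover have "finite R" using I lev_fin[OF F0] by blast
    ultimately have "card (Fs!0) \<le> card R" by (rule card_mono[rotated])
    moreover have "card (Fs!0) = m (l-1)" using lev_card[OF F0] .
    moreover have "m (l-1) > r (l-1+1)" using tyax unfolding is_type_def by blast
    ultimately show False using cR l by simp
  qed
  show "set_lt w R (Fs!1 - R)"
    unfolding set_lt_def
  proof (intro ballI)
    fix x z assume "x \<in> R" "z \<in> Fs!1 - R"
    obtain u where "u \<in> Fs!0 - R" using ne by blast
    then show "olt w x z" using A B \<open>x \<in> R\<close> \<open>z \<in> Fs!1 - R\<close> olt_trans[OF wo] unfolding set_lt_def by blast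
  qed
qed

lemma incr_bij_D:
  assumes "incr_bij w \<phi> A B" "A \<subseteq> Field w"
  shows "inj_on \<phi> A" "\<phi> ` A = B" "\<forall>x\<in>A. \<forall>y\<in>A. olt w x y \<longrightarrow> olt w (\<phi> x) (\<phi> y)"
  using assms unfolding incr_bij_def bij_betw_def by auto

lemma phi_fix:
  assumes E: "E \<in> level F l" "l \<ge> 1" and dc: "decomp w F n r (l - 1) E Fs R"
    and ph: "incr_bij w \<phi> (Fs!0) (Fs!1)" and x: "x \<in> R"
  shows "\<phi> x = x"
proof -
  note g = cap_geo[OF E dc]
  have F0: "finite (Fs!0)" "Fs!0 \<subseteq> Field w" using lev_fin[OF g(2)] by auto
  have F1: "finite (Fs!1)" "Fs!1 \<subseteq> Field w" using lev_fin[OF g(3)] by auto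
  note pd = incr_bij_D[OF ph F0(2)]
  have x0: "x \<in> Fs!0" and x1: "x \<in> Fs!1" using x g(4) by auto
  have e0: "{z\<in>Fs!0. olt w z x} = {z\<in>R. olt w z x}"
    using g(4) g(5) x olt_asym[OF wo] unfolding set_lt_def by blast
  have e1: "{z\<in>Fs!1. olt w z x} = {z\<in>R. olt w z x}"
    using g(4) g(8) x olt_asym[OF wo] unfolding set_lt_def by blast
  have "card {z\<in>\<phi> ` Fs!0. olt w z (\<phi> x)} = card {z\<in>Fs!0. olt w z x}"
    by (rule incr_card_below[OF wo pd(1) F0(2) pd(3) x0])
  then have "card {z\<in>Fs!1. olt w z (\<phi> x)} = card {z\<in>Fs!1. olt w z x}"
    using e0 e1 pd(2) by simp
  moreover have "\<phi> x \<in> Fs!1" using pd(2) x0 by blast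
  ultimately show ?thesis using pos_inj[OF wo F1 _ x1] by blast
qed

lemma rho_cap:
  assumes E: "E \<in> level F l" "l \<ge> 1" and dc: "decomp w F n r (l - 1) E Fs R"
    and x: "x \<in> Fs!0 - R" and y: "y \<in> Fs!1 - R"
  shows "rho x y = l"
proof -
  note g = cap_geo[OF E dc]
  have xy: "olt w x y" using g(6) x y unfolding set_lt_def by blast
  have xE: "x \<in> E" and yE: "y \<in> E"
  proof -
    have "E = \<Union> (set Fs)" using dc unfolding decomp_def by simp
    moreover have "Fs!0 \<in> set Fs" "Fs!1 \<in> set Fs" using nth_mem[of 0 Fs] nth_mem[of 1 Fs] g(1) by auto
    ultimately show "x \<in> E" "y \<in> E" using x y by auto
  qed
  have le: "rho x y \<le> l" using rho_le[OF E(1) xE yE] .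
  have "\<not> rho x y < l"
  proof
    assume lt: "rho x y < l"
    obtain G where G: "G \<in> level F (rho x y)" "x \<in> G" "y \<in> G" using rho_ex olt_field[OF xy] by blast
    have "x \<in> Fs!1" using lemA[of "rho x y" "l-1" G "Fs!1" y x] lt G g(3) y xy by auto
    then show False using x g(4) by blast
  qed
  then show ?thesis using le by simp
qed

lemma wk_cases:
  assumes E: "E \<in> level F l" "l \<ge> 1" and dc: "decomp w F n r (l - 1) E Fs R"
    and ph: "incr_bij w \<phi> (Fs!0) (Fs!1)"
    and x: "x \<in> Fs!0 - R" and y: "y \<in> Fs!1 - R" and y': "y' \<in> Fs!0" "\<phi> y' = y"
  shows "olt w y' x \<Longrightarrow> wk (Suc k) x y = Suc (wk k y' x)"
    and "olt w x y' \<Longrightarrow> wk (Suc k) x y = 0"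
proof -
  note g = cap_geo[OF E dc]
  have F0: "finite (Fs!0)" "Fs!0 \<subseteq> Field w" using lev_fin[OF g(2)] by auto
  note pd = incr_bij_D[OF ph F0(2)]
  have rh: "rho x y = l" using rho_cap[OF E dc x y] .
  have By: "Bl (l-1) y = {z\<in>Fs!1. olt w z y}" using Bl_eq[OF _ g(3)] y by blast
  have Bx: "Bl (l-1) x = {z\<in>Fs!0. olt w z x}" using Bl_eq[OF _ g(2)] x by blast
  have cy: "card (Bl (l-1) y) = card {z\<in>Fs!0. olt w z y'}"
    using incr_card_below[OF wo pd(1) F0(2) pd(3) y'(1)] pd(2) y'(2) By by simp
  {
    assume o: "olt w y' x"
    have "{z\<in>Fs!0. olt w z y'} \<subset> {z\<in>Fs!0. olt w z x}"
      using o y' olt_trans[OF wo] olt_irrefl[of w y'] by blast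
    then have lt: "card (Bl (l-1) y) < card (Bl (l-1) x)"
      using cy Bx F0 by (simp add: psubset_card_mono)
    have By': "Bl (l-1) y' = {z\<in>Fs!0. olt w z y'}" using Bl_eq[OF y'(1) g(2)] .
    have the: "(THE \<gamma>. olt w \<gamma> x \<and> rho \<gamma> x \<le> l - 1 \<and> card (Bl (l - 1) \<gamma>) = card (Bl (l - 1) y)) = y'"
    proof (rule the_equality)
      show "olt w y' x \<and> rho y' x \<le> l - 1 \<and> card (Bl (l - 1) y') = card (Bl (l - 1) y)"
        using o rho_le[OF g(2) y'(1)] x By' cy by auto
    next
      fix \<gamma> assume a: "olt w \<gamma> x \<and> rho \<gamma> x \<le> l - 1 \<and> card (Bl (l - 1) \<gamma>) = card (Bl (l - 1) y)"
      then have "\<gamma> \<in> Bl (l-1) x" unfolding Bl_def by simp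
      then have g0: "\<gamma> \<in> Fs!0" using Bx by simp
      have "card {z\<in>Fs!0. olt w z \<gamma>} = card {z\<in>Fs!0. olt w z y'}"
        using a Bl_eq[OF g0 g(2)] cy by simp
      then show "\<gamma> = y'" using pos_inj[OF wo F0 g0 y'(1)] by simp
    qed
    show "wk (Suc k) x y = Suc (wk k y' x)" using lt the rh by simp
  }
  {
    assume o: "olt w x y'"
    have "{z\<in>Fs!0. olt w z x} \<subset> {z\<in>Fs!0. olt w z y'}"
      using o x olt_trans[OF wo] olt_irrefl[of w x] by blast
    then have "card (Bl (l-1) x) < card (Bl (l-1) y)"
      using cy Bx F0 by (simp add: psubset_card_mono)
    then show "wk (Suc k) x y = 0" using rh by simp
  }
qed

end



lemma subsingleton_countable: "(\<forall>p\<in>S. \<forall>q\<in>S. p = q) \<Longrightarrow> countable S"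
proof (cases "S = {}")
  case False
  then obtain p where "p \<in> S" by blast
  moreover assume "\<forall>p\<in>S. \<forall>q\<in>S. p = q"
  ultimately have "S = {p}" by blast
  then show ?thesis by simp
qed simp

lemma meet_countable:
  assumes pw: "pairwise (\<lambda>p q. disjnt (f p) (f q)) T" and D: "countable D"
  shows "countable {p\<in>T. f p \<inter> D \<noteq> {}}"
proof -
  have "{p\<in>T. f p \<inter> D \<noteq> {}} = (\<Union>d\<in>D. {p\<in>T. d \<in> f p})" by blast
  moreover have "countable {p\<in>T. d \<in> f p}" for d
    by (rule subsingleton_countable) (use pw in \<open>auto simp: pairwise_def disjnt_def\<close>)
  ultimately show ?thesis using D by simp
qed

lemma avoid_uncountable:
  assumes pw: "pairwise (\<lambda>p q. disjnt (f p) (f q)) T" and D: "countable D" and T: "\<not> countable T"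
  shows "\<not> countable {p\<in>T. f p \<inter> D = {}}"
proof
  assume c1: "countable {p\<in>T. f p \<inter> D = {}}"
  have c2: "countable {p\<in>T. f p \<inter> D \<noteq> {}}" by (rule meet_countable[OF pw D])
  have "countable ({p\<in>T. f p \<inter> D = {}} \<union> {p\<in>T. f p \<inter> D \<noteq> {}})" by (rule countable_Un[OF c1 c2])
  moreover have "T = {p\<in>T. f p \<inter> D = {}} \<union> {p\<in>T. f p \<inter> D \<noteq> {}}" by blast
  ultimately show False using T by simp
qed

lemma pigeon:
  assumes T: "\<not> countable T" and g: "countable (g ` T)"
  shows "\<exists>v. \<not> countable {p\<in>T. g p = v}"
proof (rule ccontr)
  assume "\<not> (\<exists>v. \<not> countable {p\<in>T. g p = v})"
  then have a: "\<forall>v. countable {p\<in>T. g p = v}" by blast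
  have "countable (\<Union>v\<in>g ` T. {p\<in>T. g p = v})" by (rule countable_UN[OF g]) (use a in blast)
  moreover have "T = (\<Union>v\<in>g ` T. {p\<in>T. g p = v})" by blast
  ultimately show False using T by simp
qed

lemma zorn_disj:
  assumes ne: "\<forall>p\<in>X. f p \<noteq> {} \<and> countable (f p)"
    and av: "\<forall>Z. countable Z \<longrightarrow> (\<exists>p\<in>X. f p \<inter> Z = {})"
  shows "\<exists>M\<subseteq>X. \<not> countable M \<and> pairwise (\<lambda>p q. disjnt (f p) (f q)) M"
proof -
  define A where "A = {M. M \<subseteq> X \<and> pairwise (\<lambda>p q. disjnt (f p) (f q)) M}"
  have "\<forall>C\<in>chains A. \<Union>C \<in> A"
  proof
    fix C assume C: "C \<in> chains A"
    then have "C \<subseteq> A" "chain\<^sub>\<subseteq> C" unfolding chains_def by auto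
    then have "pairwise (\<lambda>p q. disjnt (f p) (f q)) (\<Union>C)"
      by (intro pairwise_chain_Union) (auto simp: A_def)
    moreover have "\<Union>C \<subseteq> X" using \<open>C \<subseteq> A\<close> unfolding A_def by blast
    ultimately show "\<Union>C \<in> A" unfolding A_def by blast
  qed
  then obtain M where M: "M \<in> A" and mx: "\<forall>Y\<in>A. M \<subseteq> Y \<longrightarrow> Y = M" using Zorn_Lemma by blast
  have "\<not> countable M"
  proof
    assume cM: "countable M"
    have "countable (\<Union>p\<in>M. f p)" using cM ne M unfolding A_def by blast
    then obtain p where p: "p \<in> X" "f p \<inter> (\<Union>p\<in>M. f p) = {}" using av by blast
    have pM: "p \<notin> M" using p ne by blast
    have "insert p M \<in> A"
      using M p unfolding A_def
      by (auto simp: pairwise_insert disjnt_def)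
    then have "insert p M = M" using mx by blast
    then show False using pM by blast
  qed
  then show ?thesis using M unfolding A_def by blast
qed

definition sh :: "'a rel \<Rightarrow> 'a set \<Rightarrow> 'a set \<Rightarrow> nat set" where
  "sh w t s = (\<lambda>x. card {z\<in>t. olt w z x}) ` s"

lemma align:
  assumes wo: "Well_order w" and inj: "inj_on \<phi> t0" and t0: "t0 \<subseteq> Field w"
    and t1: "finite t1" "t1 \<subseteq> Field w"
    and inc: "\<forall>x\<in>t0. \<forall>y\<in>t0. olt w x y \<longrightarrow> olt w (\<phi> x) (\<phi> y)" and im: "\<phi> ` t0 = t1"
    and s: "s0 \<subseteq> t0" "s1 \<subseteq> t1" and eq: "sh w t0 s0 = sh w t1 s1"
  shows "\<phi> ` s0 = s1"
proof -
  have cb: "card {z\<in>t1. olt w z (\<phi> x)} = card {z\<in>t0. olt w z x}" if "x \<in> t0" for x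
    using incr_card_below[OF wo inj t0 inc that] im by simp
  show ?thesis
  proof
    show "\<phi> ` s0 \<subseteq> s1"
    proof
      fix y assume "y \<in> \<phi> ` s0"
      then obtain x where x: "x \<in> s0" "y = \<phi> x" by blast
      have "card {z\<in>t0. olt w z x} \<in> sh w t1 s1" using eq x unfolding sh_def by blast
      then obtain u where u: "u \<in> s1" "card {z\<in>t1. olt w z u} = card {z\<in>t0. olt w z x}"
        unfolding sh_def by auto
      have xt: "x \<in> t0" using x s by blast
      have ft: "\<phi> x \<in> t1" using im xt by blast
      have ut: "u \<in> t1" using u s by blast
      have "u = \<phi> x" by (rule pos_inj[OF wo t1 ut ft]) (use u cb[OF xt] in simp)
      then show "y \<in> s1" using u x by simp
    qed
  next
    show "s1 \<subseteq> \<phi> ` s0"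
    proof
      fix u assume u: "u \<in> s1"
      have "card {z\<in>t1. olt w z u} \<in> sh w t0 s0" using eq u unfolding sh_def by blast
      then obtain x where x: "x \<in> s0" "card {z\<in>t0. olt w z x} = card {z\<in>t1. olt w z u}"
        unfolding sh_def by auto
      have xt: "x \<in> t0" using x s by blast
      have ft: "\<phi> x \<in> t1" using im xt by blast
      have ut: "u \<in> t1" using u s by blast
      have "u = \<phi> x" by (rule pos_inj[OF wo t1 ut ft]) (use x cb[OF xt] in simp)
      then show "u \<in> \<phi> ` s0" using x by simp
    qed
  qed
qed

context cs_ctx begin

definition col :: "'a set \<Rightarrow> nat" where
  "col s = (if \<exists>x y. olt w x y \<and> s = {x, y}
     then (let p = (SOME p. olt w (fst p) (snd p) \<and> s = {fst p, snd p}) in wk (rho (fst p) (snd p)) (fst p) (snd p))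
     else 0)"

lemma col_eq: assumes "olt w a b" shows "col {a, b} = wk (rho a b) a b"
proof -
  have ex: "\<exists>x y. olt w x y \<and> {a, b} = {x, y}" using assms by blast
  have "(SOME p. olt w (fst p) (snd p) \<and> {a, b} = {fst p, snd p}) = (a, b)"
  proof (rule some_equality)
    show "olt w (fst (a, b)) (snd (a, b)) \<and> {a, b} = {fst (a, b), snd (a, b)}" using assms by simp
  next
    fix p assume p: "olt w (fst p) (snd p) \<and> {a, b} = {fst p, snd p}"
    then have "fst p = a \<and> snd p = b \<or> fst p = b \<and> snd p = a" by (auto simp: doubleton_eq_iff)
    then show "p = (a, b)" using p assms olt_asym[OF wo] by (cases p) auto
  qed
  then show ?thesis unfolding col_def using ex by simp
qed

end




locale main_ctx = cs_ctx w F m n r for w :: "'a rel" and F m n r +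
  fixes AA :: "'a set set"
  assumes cap: "n_capturing 2 w F n r" and om: "omega1_order w"
    and AAfin: "\<forall>a\<in>AA. finite a \<and> a \<subseteq> Field w" and AAunc: "\<not> countable AA"
    and AAdis: "pairwise disjnt AA" and AAne: "{} \<notin> AA"
begin

definition Inv :: "'a set \<times> 'a set \<times> 'a set \<Rightarrow> bool" where
  "Inv p \<longleftrightarrow> fst (snd p) \<in> AA \<and> snd (snd p) \<in> AA \<and> fst (snd p) \<subseteq> fst p \<and> snd (snd p) \<subseteq> fst p
     \<and> finite (fst p) \<and> fst p \<subseteq> Field w \<and> set_lt w (fst (snd p)) (snd (snd p))"

definition Fam :: "('a set \<times> 'a set \<times> 'a set) set \<Rightarrow> bool" where
  "Fam T \<longleftrightarrow> \<not> countable T \<and> pairwise (\<lambda>p q. disjnt (fst p) (fst q)) T \<and> (\<forall>p\<in>T. Inv p)"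

lemma Inv_ne: assumes "Inv p" shows "fst p \<noteq> {}"
proof
  assume "fst p = {}"
  then have "fst (snd p) = {}" using assms unfolding Inv_def by blast
  moreover have "fst (snd p) \<in> AA" using assms unfolding Inv_def by blast
  ultimately show False using AAne by simp
qed

lemma cap_pair:
  assumes FT: "Fam T" and Z: "countable Z"
  shows "\<exists>p0\<in>T. \<exists>p1\<in>T. \<exists>l E Fs R \<phi>. fst p0 \<inter> Z = {} \<and> fst p1 \<inter> Z = {} \<and> disjnt (fst p0) (fst p1)
     \<and> E \<in> level F l \<and> l \<ge> 1 \<and> decomp w F n r (l - 1) E Fs R
     \<and> fst p0 \<subseteq> Fs!0 - R \<and> fst p1 \<subseteq> Fs!1 - R \<and> incr_bij w \<phi> (Fs!0) (Fs!1)
     \<and> \<phi> ` fst (snd p0) = fst (snd p1) \<and> \<phi> ` snd (snd p0) = snd (snd p1)"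
proof -
  have Tu: "\<not> countable T" and pw: "pairwise (\<lambda>p q. disjnt (fst p) (fst q)) T" and TI: "\<forall>p\<in>T. Inv p"
    using FT unfolding Fam_def by auto
  define TZ where "TZ = {p\<in>T. fst p \<inter> Z = {}}"
  have TZu: "\<not> countable TZ" unfolding TZ_def by (rule avoid_uncountable[OF pw Z Tu])
  define key where "key p = (sh w (fst p) (fst (snd p)), sh w (fst p) (snd (snd p)))" for p :: "'a set \<times> 'a set \<times> 'a set"
  have fin2: "finite (fst (snd p)) \<and> finite (snd (snd p))" if "p \<in> TZ" for p
  proof -
    have "Inv p" using TI that unfolding TZ_def by blast
    then have "finite (fst p)" "fst (snd p) \<subseteq> fst p" "snd (snd p) \<subseteq> fst p" unfolding Inv_def by auto
    then show ?thesis using finite_subset by blast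
  qed
  have "key ` TZ \<subseteq> {A. finite A} \<times> {A. finite A}"
    unfolding key_def sh_def using fin2 by auto
  moreover have "countable ({A::nat set. finite A} \<times> {A::nat set. finite A})"
    using countable_Collect_finite by (intro countable_SIGMA) auto
  ultimately have "countable (key ` TZ)" by (rule countable_subset)
  then obtain v where T2u: "\<not> countable {p\<in>TZ. key p = v}" using pigeon[OF TZu] by blast
  define T2 where "T2 = {p\<in>TZ. key p = v}"
  have T2T: "T2 \<subseteq> T" unfolding T2_def TZ_def by blast
  have injf: "inj_on fst T2"
  proof (rule inj_onI)
    fix p q assume pq: "p \<in> T2" "q \<in> T2" "fst p = fst q"
    show "p = q"
    proof (rule ccontr)
      assume "p \<noteq> q"
      then have "disjnt (fst p) (fst q)" using pw pq T2T unfolding pairwise_def by blast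
      then have "fst p = {}" using pq by (simp add: disjnt_def)
      then show False using Inv_ne TI pq T2T by blast
    qed
  qed
  define S where "S = fst ` T2"
  have Su: "\<not> countable S" unfolding S_def using T2u countable_image_inj_on[OF _ injf] unfolding T2_def by blast
  have Sf: "\<forall>s\<in>S. finite s \<and> s \<subseteq> Field w" unfolding S_def using TI T2T unfolding Inv_def by blast
  have "\<forall>k. \<exists>C l E. C \<subseteq> S \<and> finite C \<and> card C = 2 \<and> l > k \<and> E \<in> level F l \<and> captures w F n r l E C"
    using cap Su Sf unfolding n_capturing_def by blast
  then obtain C l E where C: "C \<subseteq> S" "card C = 2" "E \<in> level F l" "captures w F n r l E C" by blast
  then have l1: "l \<ge> 1" unfolding captures_def by blast
  from C(4) obtain Fs R cs where dc: "decomp w F n r (l - 1) E Fs R" and cs: "distinct cs" "set cs = C"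
    and csp: "\<forall>i < length cs. cs ! i \<subseteq> Fs ! i \<and> cs ! i - R \<noteq> {}
                   \<and> (\<exists>\<phi>. incr_bij w \<phi> (Fs ! 0) (Fs ! i) \<and> \<phi> ` (cs ! 0) = cs ! i)"
    unfolding captures_def by blast
  have len: "length cs = 2" using distinct_card[OF cs(1)] cs(2) C(2) by simp
  have cs1: "cs ! 1 \<subseteq> Fs ! 1 \<and> cs ! 1 - R \<noteq> {} \<and> (\<exists>\<phi>. incr_bij w \<phi> (Fs ! 0) (Fs ! 1) \<and> \<phi> ` (cs ! 0) = cs ! 1)"
    using csp len by simp
  have cs0: "cs ! 0 \<subseteq> Fs ! 0" using csp len by simp
  obtain \<phi> where ph: "incr_bij w \<phi> (Fs ! 0) (Fs ! 1)" "\<phi> ` (cs ! 0) = cs ! 1" using cs1 by blast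
  have c0: "cs!0 \<subseteq> Fs!0" and c1: "cs!1 \<subseteq> Fs!1" using cs0 cs1 by auto
  have cne: "cs!0 \<noteq> cs!1" using cs(1) len by (simp add: nth_eq_iff_index_eq)
  have "cs!0 \<in> S" "cs!1 \<in> S" using cs(2) C(1) len nth_mem[of 0 cs] nth_mem[of 1 cs] by auto
  then obtain p0 p1 where p: "p0 \<in> T2" "p1 \<in> T2" "fst p0 = cs!0" "fst p1 = cs!1" unfolding S_def by blast
  have pT: "p0 \<in> T" "p1 \<in> T" using p T2T by auto
  have dj: "disjnt (fst p0) (fst p1)" using pw pT p cne unfolding pairwise_def by metis
  note g = cap_geo[OF C(3) l1 dc]
  have F0: "finite (Fs!0)" "Fs!0 \<subseteq> Field w" using lev_fin[OF g(2)] by auto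
  have F1: "finite (Fs!1)" "Fs!1 \<subseteq> Field w" using lev_fin[OF g(3)] by auto
  note pd = incr_bij_D[OF ph(1) F0(2)]
  have r0: "cs!0 \<inter> R = {}"
  proof (rule ccontr)
    assume "cs!0 \<inter> R \<noteq> {}"
    then obtain x where x: "x \<in> cs!0" "x \<in> R" by blast
    have "\<phi> x = x" by (rule phi_fix[OF C(3) l1 dc ph(1) x(2)])
    then have "x \<in> cs!1" using ph(2) x(1) by force
    then show False using dj x(1) p by (auto simp: disjnt_def)
  qed
  have r1: "cs!1 \<inter> R = {}"
  proof (rule ccontr)
    assume "cs!1 \<inter> R \<noteq> {}"
    then obtain x where x: "x \<in> cs!1" "x \<in> R" by blast
    then obtain u where u: "u \<in> cs!0" "x = \<phi> u" using ph(2) by blast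
    have fx: "\<phi> x = x" by (rule phi_fix[OF C(3) l1 dc ph(1) x(2)])
    have "x \<in> Fs!0" using x(2) g(4) by blast
    then have "u = x" using pd(1) u fx c0 by (metis inj_onD subsetD)
    then show False using r0 u x by blast
  qed
  have t0: "fst p0 \<subseteq> Fs!0 - R" using c0 r0 p by blast
  have t1: "fst p1 \<subseteq> Fs!1 - R" using c1 r1 p by blast
  have inj0: "inj_on \<phi> (fst p0)" using pd(1) c0 p inj_on_subset by metis
  have inc0: "\<forall>x\<in>fst p0. \<forall>y\<in>fst p0. olt w x y \<longrightarrow> olt w (\<phi> x) (\<phi> y)" using pd(3) c0 p by blast
  have tf0: "fst p0 \<subseteq> Field w" using c0 F0 p by blast
  have tf1: "finite (fst p1)" "fst p1 \<subseteq> Field w" using c1 F1 p by (auto intro: finite_subset)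
  have im: "\<phi> ` fst p0 = fst p1" using ph(2) p by simp
  have I0: "Inv p0" and I1: "Inv p1" using TI pT by auto
  have kk: "key p0 = key p1" using p unfolding T2_def by simp
  have al1: "\<phi> ` fst (snd p0) = fst (snd p1)"
    by (rule align[OF wo inj0 tf0 tf1 inc0 im]) (use I0 I1 kk in \<open>auto simp: Inv_def key_def\<close>)
  have al2: "\<phi> ` snd (snd p0) = snd (snd p1)"
    by (rule align[OF wo inj0 tf0 tf1 inc0 im]) (use I0 I1 kk in \<open>auto simp: Inv_def key_def\<close>)
  have z: "fst p0 \<inter> Z = {}" "fst p1 \<inter> Z = {}" using p unfolding T2_def TZ_def by auto
  show ?thesis
    apply (rule bexI[OF _ pT(1)], rule bexI[OF _ pT(2)])
    using z dj C(3) l1 dc t0 t1 ph(1) al1 al2 by blast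
qed

end



context main_ctx begin

definition Good :: "nat \<Rightarrow> ('a set \<times> 'a set \<times> 'a set) set \<Rightarrow> bool" where
  "Good c T \<longleftrightarrow> Fam T \<and> (\<forall>p\<in>T. \<forall>a\<in>fst (snd p). \<forall>b\<in>snd (snd p). \<forall>k. rho a b \<le> k \<longrightarrow> wk k a b = c)"

lemma AA_avoid: "countable D \<Longrightarrow> \<not> countable {a\<in>AA. a \<inter> D = {}}"
  using avoid_uncountable[of "\<lambda>x. x" AA D] AAdis AAunc by simp

lemma fam0: "\<exists>T. Fam T"
proof -
  define X where "X = {p. Inv p}"
  have ne: "\<forall>p\<in>X. fst p \<noteq> {} \<and> countable (fst p)"
    unfolding X_def using Inv_ne by (auto simp: Inv_def intro: countable_finite)
  have av: "\<forall>Z. countable Z \<longrightarrow> (\<exists>p\<in>X. fst p \<inter> Z = {})"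
  proof (intro allI impI)
    fix Z :: "'a set" assume Z: "countable Z"
    have "{a\<in>AA. a \<inter> Z = {}} \<noteq> {}" using AA_avoid[OF Z] by (metis countable_empty)
    then obtain a where a: "a \<in> AA" "a \<inter> Z = {}" by blast
    have af: "finite a" "a \<subseteq> Field w" using AAfin a by auto
    define D where "D = Z \<union> (\<Union>x\<in>a. insert x (underS w x))"
    have "countable (underS w x)" if "x \<in> a" for x
      using om af that unfolding omega1_order_def by blast
    then have cD: "countable D" unfolding D_def using Z af countable_finite by auto
    have "{a\<in>AA. a \<inter> D = {}} \<noteq> {}" using AA_avoid[OF cD] by (metis countable_empty)
    then obtain b where b: "b \<in> AA" "b \<inter> D = {}" by blast
    have bf: "finite b" "b \<subseteq> Field w" using AAfin b by auto
    have lt: "set_lt w a b"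
      unfolding set_lt_def
    proof (intro ballI)
      fix x y assume xy: "x \<in> a" "y \<in> b"
      then have "y \<noteq> x" "y \<notin> underS w x" using b(2) unfolding D_def by auto
      moreover have "x \<in> Field w" "y \<in> Field w" using af bf xy by auto
      ultimately show "olt w x y" using olt_total[OF wo] unfolding underS_def olt_def by blast
    qed
    have "Inv (a \<union> b, a, b)" unfolding Inv_def using a b af bf lt by auto
    moreover have "(a \<union> b) \<inter> Z = {}" using a b unfolding D_def by blast
    ultimately show "\<exists>p\<in>X. fst p \<inter> Z = {}" unfolding X_def by force
  qed
  obtain M where "M \<subseteq> X" "\<not> countable M" "pairwise (\<lambda>p q. disjnt (fst p) (fst q)) M"
    using zorn_disj[OF ne av] by blast
  then have "Fam M" unfolding Fam_def X_def by blast
  then show ?thesis by blast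
qed

lemma base_step:
  assumes FT: "Fam T" shows "\<exists>T'. Good 0 T'"
proof -
  define X where "X = {q. Inv q \<and> (\<forall>a\<in>fst (snd q). \<forall>b\<in>snd (snd q). \<forall>k. rho a b \<le> k \<longrightarrow> wk k a b = 0)}"
  have ne: "\<forall>p\<in>X. fst p \<noteq> {} \<and> countable (fst p)"
    unfolding X_def using Inv_ne by (auto simp: Inv_def intro: countable_finite)
  have TI: "\<forall>p\<in>T. Inv p" using FT unfolding Fam_def by blast
  have av: "\<forall>Z. countable Z \<longrightarrow> (\<exists>p\<in>X. fst p \<inter> Z = {})"
  proof (intro allI impI)
    fix Z :: "'a set" assume Z: "countable Z"
    obtain p0 p1 l E Fs R \<phi> where pT: "p0 \<in> T" "p1 \<in> T" and z: "fst p0 \<inter> Z = {}" "fst p1 \<inter> Z = {}"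
      and E: "E \<in> level F l" "l \<ge> 1" and dc: "decomp w F n r (l - 1) E Fs R"
      and t0: "fst p0 \<subseteq> Fs!0 - R" and t1: "fst p1 \<subseteq> Fs!1 - R" and ph: "incr_bij w \<phi> (Fs!0) (Fs!1)"
      and al: "\<phi> ` fst (snd p0) = fst (snd p1)" "\<phi> ` snd (snd p0) = snd (snd p1)"
      using cap_pair[OF FT Z] by (elim bexE exE conjE) (rule that; assumption)
    note g = cap_geo[OF E dc]
    have I0: "Inv p0" and I1: "Inv p1" using TI pT by auto
    define q where "q = (fst p0 \<union> fst p1, fst (snd p0), snd (snd p1))"
    have lo0: "fst (snd p0) \<subseteq> Fs!0 - R" using I0 t0 unfolding Inv_def by blast
    have hi1: "snd (snd p1) \<subseteq> Fs!1 - R" using I1 t1 unfolding Inv_def by blast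
    have "set_lt w (fst (snd p0)) (snd (snd p1))" using g(6) lo0 hi1 unfolding set_lt_def by blast
    then have "Inv q" using I0 I1 unfolding Inv_def q_def by auto
    moreover have "\<forall>a\<in>fst (snd q). \<forall>b\<in>snd (snd q). \<forall>k. rho a b \<le> k \<longrightarrow> wk k a b = 0"
    proof (intro ballI allI impI)
      fix a b k assume a: "a \<in> fst (snd q)" and b: "b \<in> snd (snd q)" and "rho a b \<le> k"
      show "wk k a b = 0"
      proof (cases k)
        case 0 then show ?thesis by simp
      next
        case (Suc k')
        from b obtain \<eta> where \<eta>: "\<eta> \<in> snd (snd p0)" "b = \<phi> \<eta>" using al(2) unfolding q_def by auto
        have a0: "a \<in> fst (snd p0)" using a unfolding q_def by simp
        have o: "olt w a \<eta>" using I0 a0 \<eta>(1) unfolding Inv_def set_lt_def by blast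
        have e0: "\<eta> \<in> Fs!0" using \<eta>(1) I0 t0 unfolding Inv_def by blast
        have a1: "a \<in> Fs!0 - R" using lo0 a0 by blast
        have "b \<in> snd (snd p1)" using b unfolding q_def by simp
        then have b1: "b \<in> Fs!1 - R" using hi1 by blast
        have "wk (Suc k') a b = 0" by (rule wk_cases(2)[OF E dc ph a1 b1 e0 \<eta>(2)[symmetric] o])
        then show ?thesis using Suc by simp
      qed
    qed
    ultimately have "q \<in> X" unfolding X_def by blast
    moreover have "fst q \<inter> Z = {}" using z unfolding q_def by auto
    ultimately show "\<exists>p\<in>X. fst p \<inter> Z = {}" by blast
  qed
  obtain M where "M \<subseteq> X" "\<not> countable M" "pairwise (\<lambda>p q. disjnt (fst p) (fst q)) M"
    using zorn_disj[OF ne av] by blast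
  then have "Good 0 M" unfolding Good_def Fam_def X_def by blast
  then show ?thesis by blast
qed

lemma step:
  assumes GT: "Good c T" shows "\<exists>T'. Good (Suc c) T'"
proof -
  have FT: "Fam T" using GT unfolding Good_def by blast
  have IH: "\<forall>p\<in>T. \<forall>a\<in>fst (snd p). \<forall>b\<in>snd (snd p). \<forall>k. rho a b \<le> k \<longrightarrow> wk k a b = c"
    using GT unfolding Good_def by blast
  define X where "X = {q. Inv q \<and> (\<forall>a\<in>fst (snd q). \<forall>b\<in>snd (snd q). \<forall>k. rho a b \<le> k \<longrightarrow> wk k a b = Suc c)}"
  have ne: "\<forall>p\<in>X. fst p \<noteq> {} \<and> countable (fst p)"
    unfolding X_def using Inv_ne by (auto simp: Inv_def intro: countable_finite)
  have TI: "\<forall>p\<in>T. Inv p" using FT unfolding Fam_def by blast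
  have av: "\<forall>Z. countable Z \<longrightarrow> (\<exists>p\<in>X. fst p \<inter> Z = {})"
  proof (intro allI impI)
    fix Z :: "'a set" assume Z: "countable Z"
    obtain p0 p1 l E Fs R \<phi> where pT: "p0 \<in> T" "p1 \<in> T" and z: "fst p0 \<inter> Z = {}" "fst p1 \<inter> Z = {}"
      and E: "E \<in> level F l" "l \<ge> 1" and dc: "decomp w F n r (l - 1) E Fs R"
      and t0: "fst p0 \<subseteq> Fs!0 - R" and t1: "fst p1 \<subseteq> Fs!1 - R" and ph: "incr_bij w \<phi> (Fs!0) (Fs!1)"
      and al: "\<phi> ` fst (snd p0) = fst (snd p1)" "\<phi> ` snd (snd p0) = snd (snd p1)"
      using cap_pair[OF FT Z] by (elim bexE exE conjE) (rule that; assumption)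
    note g = cap_geo[OF E dc]
    have I0: "Inv p0" and I1: "Inv p1" using TI pT by auto
    define q where "q = (fst p0 \<union> fst p1, snd (snd p0), fst (snd p1))"
    have hi0: "snd (snd p0) \<subseteq> Fs!0 - R" using I0 t0 unfolding Inv_def by blast
    have lo0: "fst (snd p0) \<subseteq> Fs!0 - R" using I0 t0 unfolding Inv_def by blast
    have lo1: "fst (snd p1) \<subseteq> Fs!1 - R" using I1 t1 unfolding Inv_def by blast
    have "set_lt w (snd (snd p0)) (fst (snd p1))" using g(6) hi0 lo1 unfolding set_lt_def by blast
    then have "Inv q" using I0 I1 unfolding Inv_def q_def by auto
    moreover have "\<forall>a\<in>fst (snd q). \<forall>b\<in>snd (snd q). \<forall>k. rho a b \<le> k \<longrightarrow> wk k a b = Suc c"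
    proof (intro ballI allI impI)
      fix a b k assume a: "a \<in> fst (snd q)" and b: "b \<in> snd (snd q)" and k: "rho a b \<le> k"
      have a0: "a \<in> Fs!0 - R" using hi0 a unfolding q_def by auto
      have b1: "b \<in> Fs!1 - R" using lo1 b unfolding q_def by auto
      have rl: "rho a b = l" by (rule rho_cap[OF E dc a0 b1])
      then obtain k' where k': "k = Suc k'" "l - 1 \<le> k'" using k E(2) by (cases k) auto
      from b obtain lam where lam: "lam \<in> fst (snd p0)" "b = \<phi> lam" using al(1) unfolding q_def by auto
      have ah: "a \<in> snd (snd p0)" using a unfolding q_def by simp
      have o: "olt w lam a" using I0 ah lam(1) unfolding Inv_def set_lt_def by blast
      have l0: "lam \<in> Fs!0" using lo0 lam(1) by blast
      have "rho lam a \<le> l - 1" using rho_le[OF g(2) l0] a0 by blast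
      then have "wk k' lam a = c" using IH pT(1) lam(1) ah k'(2) by fastforce
      then show "wk k a b = Suc c" using wk_cases(1)[OF E dc ph a0 b1 l0 lam(2)[symmetric] o] k'(1) by simp
    qed
    ultimately have "q \<in> X" unfolding X_def by blast
    moreover have "fst q \<inter> Z = {}" using z unfolding q_def by auto
    ultimately show "\<exists>p\<in>X. fst p \<inter> Z = {}" by blast
  qed
  obtain M where "M \<subseteq> X" "\<not> countable M" "pairwise (\<lambda>p q. disjnt (fst p) (fst q)) M"
    using zorn_disj[OF ne av] by blast
  then have "Good (Suc c) M" unfolding Good_def Fam_def X_def by blast
  then show ?thesis by blast
qed

lemma good_all: "\<exists>T. Good c T"
proof (induction c)
  case 0 then show ?case using fam0 base_step by blast
next
  case (Suc c) then show ?case using step by blast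
qed

lemma main_result: "\<exists>a\<in>AA. \<exists>b\<in>AA. set_lt w a b \<and> (\<forall>\<alpha>\<in>a. \<forall>\<beta>\<in>b. col {\<alpha>, \<beta>} = c)"
proof -
  obtain T where G: "Good c T" using good_all by blast
  then have "T \<noteq> {}" unfolding Good_def Fam_def by auto
  then obtain p where p: "p \<in> T" by blast
  have I: "Inv p" using G p unfolding Good_def Fam_def by blast
  have W: "\<forall>a\<in>fst (snd p). \<forall>b\<in>snd (snd p). \<forall>k. rho a b \<le> k \<longrightarrow> wk k a b = c" using G p unfolding Good_def by blast
  have "\<forall>\<alpha>\<in>fst (snd p). \<forall>\<beta>\<in>snd (snd p). col {\<alpha>, \<beta>} = c"
  proof (intro ballI)
    fix \<alpha> \<beta> assume a: "\<alpha> \<in> fst (snd p)" and b: "\<beta> \<in> snd (snd p)"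
    have "olt w \<alpha> \<beta>" using I a b unfolding Inv_def set_lt_def by blast
    then show "col {\<alpha>, \<beta>} = c" using col_eq W a b by simp
  qed
  then show ?thesis using I unfolding Inv_def by blast
qed

end



theorem mainTheorem9:
  fixes w :: "'a rel"
  assumes "omega1_order w"
    and "CA 2 w"
  shows "\<exists>col :: 'a set \<Rightarrow> nat.
           \<forall>AA. (\<forall>a\<in>AA. finite a \<and> a \<subseteq> Field w) \<and> \<not> countable AA \<and> pairwise disjnt AA \<longrightarrow>
             (\<forall>k::nat. \<exists>a\<in>AA. \<exists>b\<in>AA. set_lt w a b \<and>
                (\<forall>\<alpha>\<in>a. \<forall>\<beta>\<in>b. col {\<alpha>, \<beta>} = k))"
proof -
  have wo: "Well_order w" using assms(1) unfolding omega1_order_def by blast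
  have "is_type mm (\<lambda>_. 2) tr \<and> (\<forall>k\<ge>1. (2::nat) \<le> (\<lambda>_. 2::nat) k)" using type_exists by simp
  then obtain F where F: "construction_scheme w F mm (\<lambda>_. 2) tr" "n_capturing 2 w F (\<lambda>_. 2) tr"
    using assms(2) unfolding CA_def by blast
  interpret C: cs_ctx w F mm "\<lambda>_. 2" tr
    by unfold_locales (use wo F type_exists in auto)
  show ?thesis
  proof (rule exI[of _ C.col], intro allI impI)
    fix AA :: "'a set set" and k :: nat
    assume H: "(\<forall>a\<in>AA. finite a \<and> a \<subseteq> Field w) \<and> \<not> countable AA \<and> pairwise disjnt AA"
    show "\<exists>a\<in>AA. \<exists>b\<in>AA. set_lt w a b \<and> (\<forall>\<alpha>\<in>a. \<forall>\<beta>\<in>b. C.col {\<alpha>, \<beta>} = k)"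
    proof (cases "{} \<in> AA")
      case True then show ?thesis by (auto simp: set_lt_def)
    next
      case False
      interpret M: main_ctx w F mm "\<lambda>_. 2" tr AA
        by unfold_locales (use F assms H False in auto)
      show ?thesis using M.main_result by blast
    qed
  qed
qed



end
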